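(* Let $G$ be a group and let $A,B,C$ be nonempty finite subsets of $G$ with $B\subset C$ and $1\in C$. Then either $ABC=AB$ or $|ABC|\geq |A|+|B|$.
   Context: For subsets $X,Y,Z$ of a multiplicative group $G$, $XY=\{xy\mid x\in X,\ y\in Y\}$ and $XYZ=\{xyz\mid x\in X,\ y\in Y,\ z\in Z\}$. *)

theory Defs
  imports "HOL-Algebra.Group"
begin

definition setmul :: "('a, 'b) monoid_scheme \<Rightarrow> 'a set \<Rightarrow> 'a set \<Rightarrow> 'a set" where
  "setmul G X Y = {x \<otimes>\<^bsub>G\<^esub> y | x y. x \<in> X \<and> y \<in> Y}"

definition setmul3 :: "('a, 'b) monoid_scheme \<Rightarrow> 'a set \<Rightarrow> 'a set \<Rightarrow> 'a set \<Rightarrow> 'a set" where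
  "setmul3 G X Y Z = {x \<otimes>\<^bsub>G\<^esub> y \<otimes>\<^bsub>G\<^esub> z | x y z. x \<in> X \<and> y \<in> Y \<and> z \<in> Z}"

end

theory Submission
  imports Defs
begin

lemma (in group) setmul_finite:
  assumes "finite A" "finite B"
  shows "finite (setmul G A B)"
proof -
  have "setmul G A B = (\<lambda>(a,b). a \<otimes> b) ` (A \<times> B)"
    unfolding setmul_def by auto
  thus ?thesis using assms by simp
qed

lemma (in group) setmul3_finite:
  assumes "finite A" "finite B" "finite C"
  shows "finite (setmul3 G A B C)"
proof -
  have "setmul3 G A B C = (\<lambda>(a,b,c). a \<otimes> b \<otimes> c) ` (A \<times> B \<times> C)"
    unfolding setmul3_def by force
  thus ?thesis using assms by simp
qed

lemma (in group) card_right_ident: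
  assumes "S \<subseteq> carrier G" "finite S" "g \<in> carrier G"
  shows "card (S \<union> (\<lambda>a. a \<otimes> g) ` S) + card {a \<in> S. a \<otimes> g \<in> S} = 2 * card S"
proof -
  have inj: "inj_on (\<lambda>a. a \<otimes> g) S"
    using inj_on_multc[OF assms(3)] assms(1) inj_on_subset by blast
  have c1: "card ((\<lambda>a. a \<otimes> g) ` S) = card S" using card_image[OF inj] .
  have "(\<lambda>a. a \<otimes> g) ` {a \<in> S. a \<otimes> g \<in> S} = S \<inter> (\<lambda>a. a \<otimes> g) ` S" by auto
  moreover have "card ((\<lambda>a. a \<otimes> g) ` {a \<in> S. a \<otimes> g \<in> S}) = card {a \<in> S. a \<otimes> g \<in> S}"
    by (rule card_image) (rule inj_on_subset[OF inj], auto)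
  ultimately have c2: "card {a \<in> S. a \<otimes> g \<in> S} = card (S \<inter> (\<lambda>a. a \<otimes> g) ` S)" by simp
  have "card (S \<union> (\<lambda>a. a \<otimes> g) ` S) + card (S \<inter> (\<lambda>a. a \<otimes> g) ` S) = card S + card ((\<lambda>a. a \<otimes> g) ` S)"
    using card_Un_Int[of S "(\<lambda>a. a \<otimes> g) ` S"] assms by simp
  thus ?thesis using c1 c2 by simp
qed

lemma (in group) card_left_ident:
  assumes "S \<subseteq> carrier G" "finite S" "g \<in> carrier G"
  shows "card (S \<union> (\<lambda>a. g \<otimes> a) ` S) + card {a \<in> S. g \<otimes> a \<in> S} = 2 * card S"
proof -
  have inj: "inj_on (\<lambda>a. g \<otimes> a) S"
    using inj_on_cmult[OF assms(3)] assms(1) inj_on_subset by blast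
  have c1: "card ((\<lambda>a. g \<otimes> a) ` S) = card S" using card_image[OF inj] .
  have "(\<lambda>a. g \<otimes> a) ` {a \<in> S. g \<otimes> a \<in> S} = S \<inter> (\<lambda>a. g \<otimes> a) ` S" by auto
  moreover have "card ((\<lambda>a. g \<otimes> a) ` {a \<in> S. g \<otimes> a \<in> S}) = card {a \<in> S. g \<otimes> a \<in> S}"
    by (rule card_image) (rule inj_on_subset[OF inj], auto)
  ultimately have c2: "card {a \<in> S. g \<otimes> a \<in> S} = card (S \<inter> (\<lambda>a. g \<otimes> a) ` S)" by simp
  have "card (S \<union> (\<lambda>a. g \<otimes> a) ` S) + card (S \<inter> (\<lambda>a. g \<otimes> a) ` S) = card S + card ((\<lambda>a. g \<otimes> a) ` S)"
    using card_Un_Int[of S "(\<lambda>a. g \<otimes> a) ` S"] assms by simp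
  thus ?thesis using c1 c2 by simp
qed


lemma (in group) kemperman:
  assumes AG: "A \<subseteq> carrier G" and BG: "B \<subseteq> carrier G"
    and fA: "finite A" and fB: "finite B"
    and a0: "a0 \<in> A" and b0: "b0 \<in> B"
    and uniq: "\<And>a b. a \<in> A \<Longrightarrow> b \<in> B \<Longrightarrow> a \<otimes> b = a0 \<otimes> b0 \<Longrightarrow> a = a0"
  shows "card A + card B \<le> card (setmul G A B) + 1"
proof -
  define X where "X = setmul G A B"
  have fX: "finite X" unfolding X_def using setmul_finite fA fB by blast
  have a0G: "a0 \<in> carrier G" and b0G: "b0 \<in> carrier G" using a0 b0 AG BG by auto
  define P where "P = (\<lambda>p. fst p \<subseteq> carrier G \<and> snd p \<subseteq> carrier G \<and> finite (fst p) \<and> finite (snd p)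
     \<and> a0 \<in> fst p \<and> b0 \<in> snd p \<and> setmul G (fst p) (snd p) \<subseteq> X
     \<and> (\<forall>a\<in>fst p. \<forall>b\<in>snd p. a \<otimes> b = a0 \<otimes> b0 \<longrightarrow> a = a0))"
  have bnd: "card (fst q) \<le> card X \<and> card (snd q) \<le> card X" if "P q" for q
  proof -
    have q: "fst q \<subseteq> carrier G" "snd q \<subseteq> carrier G" "a0 \<in> fst q" "b0 \<in> snd q"
      "setmul G (fst q) (snd q) \<subseteq> X" using that unfolding P_def by auto
    have i1: "inj_on (\<lambda>a. a \<otimes> b0) (fst q)"
      using inj_on_multc[OF b0G] q(1) inj_on_subset by blast
    have i2: "inj_on (\<lambda>a. a0 \<otimes> a) (snd q)"
      using inj_on_cmult[OF a0G] q(2) inj_on_subset by blast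
    have s1: "(\<lambda>a. a \<otimes> b0) ` (fst q) \<subseteq> X" using q unfolding setmul_def by blast
    have s2: "(\<lambda>a. a0 \<otimes> a) ` (snd q) \<subseteq> X" using q unfolding setmul_def by blast
    show ?thesis using card_mono[OF fX s1] card_mono[OF fX s2] card_image[OF i1] card_image[OF i2] by simp
  qed
  have PAB: "P (A,B)" unfolding P_def X_def using assms by auto
  obtain p1 where p1: "P p1" "\<And>q. P q \<Longrightarrow> card (fst q) + card (snd q) \<le> card (fst p1) + card (snd p1)"
    using ex_has_greatest_nat[of P "(A,B)" "\<lambda>q. card (fst q) + card (snd q)" "2 * card X + 1"] PAB bnd
    by fastforce
  define s where "s = card (fst p1) + card (snd p1)"
  obtain p where p: "P p" "card (fst p) + card (snd p) = s"
     "\<And>q. P q \<Longrightarrow> card (fst q) + card (snd q) = s \<Longrightarrow> card (snd q) \<le> card (snd p)"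
    using ex_has_greatest_nat[of "\<lambda>q. P q \<and> card (fst q) + card (snd q) = s" p1 "\<lambda>q. card (snd q)" "card X + 1"]
      p1 bnd s_def by fastforce
  obtain A1 B1 where pAB: "p = (A1, B1)" by (cases p)
  have PA1: "A1 \<subseteq> carrier G" "B1 \<subseteq> carrier G" "finite A1" "finite B1" "a0 \<in> A1" "b0 \<in> B1"
      "setmul G A1 B1 \<subseteq> X" "\<And>a b. a \<in> A1 \<Longrightarrow> b \<in> B1 \<Longrightarrow> a \<otimes> b = a0 \<otimes> b0 \<Longrightarrow> a = a0"
    using p(1) unfolding pAB P_def by auto
  have sA1: "card A1 + card B1 = s" using p(2) pAB by simp
  have key: "a = a0" if a: "a \<in> A1" and b: "b \<in> B1" and eq: "a \<otimes> b0 = a0 \<otimes> b" for a b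
  proof -
    have aG: "a \<in> carrier G" and bG: "b \<in> carrier G" using a b PA1 by auto
    define g where "g = inv a0 \<otimes> a"
    have gG: "g \<in> carrier G" unfolding g_def using aG a0G by simp
    have ag: "a0 \<otimes> g = a" unfolding g_def using aG a0G by (simp add: m_assoc[symmetric])
    have gb: "g \<otimes> b0 = b" unfolding g_def using aG a0G b0G bG eq
      by (metis inv_closed m_assoc l_inv l_one)
    define T1 where "T1 = (A1 \<union> (\<lambda>x. x \<otimes> g) ` A1, {y \<in> B1. g \<otimes> y \<in> B1})"
    define T2 where "T2 = ({x \<in> A1. x \<otimes> g \<in> A1}, B1 \<union> (\<lambda>y. g \<otimes> y) ` B1)"
    have PT1: "P T1" unfolding P_def T1_def fst_conv snd_conv
    proof (intro conjI ballI impI)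
      show "A1 \<union> (\<lambda>x. x \<otimes> g) ` A1 \<subseteq> carrier G" using PA1 gG by auto
      show "{y \<in> B1. g \<otimes> y \<in> B1} \<subseteq> carrier G" using PA1 by auto
      show "finite (A1 \<union> (\<lambda>x. x \<otimes> g) ` A1)" using PA1 by simp
      show "finite {y \<in> B1. g \<otimes> y \<in> B1}" using PA1 by simp
      show "a0 \<in> A1 \<union> (\<lambda>x. x \<otimes> g) ` A1" using PA1 by simp
      show "b0 \<in> {y \<in> B1. g \<otimes> y \<in> B1}" using PA1 gb b by simp
      show "setmul G (A1 \<union> (\<lambda>x. x \<otimes> g) ` A1) {y \<in> B1. g \<otimes> y \<in> B1} \<subseteq> X"
      proof
        fix z assume "z \<in> setmul G (A1 \<union> (\<lambda>x. x \<otimes> g) ` A1) {y \<in> B1. g \<otimes> y \<in> B1}"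
        then obtain x y where xy: "z = x \<otimes> y" "x \<in> A1 \<union> (\<lambda>x. x \<otimes> g) ` A1" "y \<in> B1" "g \<otimes> y \<in> B1"
          unfolding setmul_def by blast
        show "z \<in> X"
        proof (cases "x \<in> A1")
          case True
          then have "z \<in> setmul G A1 B1" using xy unfolding setmul_def by blast
          then show ?thesis using PA1 by blast
        next
          case False
          then obtain x' where x': "x' \<in> A1" "x = x' \<otimes> g" using xy by blast
          have "x' \<in> carrier G" "y \<in> carrier G" using xy x' PA1 by auto
          then have "z = x' \<otimes> (g \<otimes> y)" using xy x' gG by (simp add: m_assoc)
          then have "z \<in> setmul G A1 B1" using xy x' unfolding setmul_def by blast
          then show ?thesis using PA1 by blast
        qed
      qed
      fix x y assume x: "x \<in> A1 \<union> (\<lambda>x. x \<otimes> g) ` A1" and y: "y \<in> {y \<in> B1. g \<otimes> y \<in> B1}"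
        and e: "x \<otimes> y = a0 \<otimes> b0"
      show "x = a0"
      proof (cases "x \<in> A1")
        case True
        then show ?thesis using PA1(8)[OF True _ e] y by simp
      next
        case False
        then obtain x' where x': "x' \<in> A1" "x = x' \<otimes> g" using x by blast
        have x'G: "x' \<in> carrier G" and yG: "y \<in> carrier G" using x' y PA1 by auto
        have e2: "x' \<otimes> (g \<otimes> y) = a0 \<otimes> b0" using e x' x'G yG gG by (simp add: m_assoc)
        have "x' = a0" using PA1(8)[OF x'(1) _ e2] y by simp
        then have "g \<otimes> y = b0" using e2 a0G gG yG b0G by (metis Units_eq Units_l_cancel m_closed)
        then have ydef: "y = inv g \<otimes> b0" using gG yG b0G
          by (metis inv_closed l_inv l_one m_assoc)
        have "a \<otimes> y = a0 \<otimes> b0"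
          using ag ydef gG b0G a0G by (metis inv_closed m_assoc r_inv r_one m_closed)
        then have "a = a0" using PA1(8)[OF a] y by blast
        then show ?thesis using x' \<open>x' = a0\<close> ag by simp
      qed
    qed
    have PT2: "P T2" unfolding P_def T2_def fst_conv snd_conv
    proof (intro conjI ballI impI)
      show "{x \<in> A1. x \<otimes> g \<in> A1} \<subseteq> carrier G" using PA1 by auto
      show "B1 \<union> (\<lambda>y. g \<otimes> y) ` B1 \<subseteq> carrier G" using PA1 gG by auto
      show "finite {x \<in> A1. x \<otimes> g \<in> A1}" using PA1 by simp
      show "finite (B1 \<union> (\<lambda>y. g \<otimes> y) ` B1)" using PA1 by simp
      show "a0 \<in> {x \<in> A1. x \<otimes> g \<in> A1}" using PA1 ag a by simp
      show "b0 \<in> B1 \<union> (\<lambda>y. g \<otimes> y) ` B1" using PA1 by simp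
      show "setmul G {x \<in> A1. x \<otimes> g \<in> A1} (B1 \<union> (\<lambda>y. g \<otimes> y) ` B1) \<subseteq> X"
      proof
        fix z assume "z \<in> setmul G {x \<in> A1. x \<otimes> g \<in> A1} (B1 \<union> (\<lambda>y. g \<otimes> y) ` B1)"
        then obtain x y where xy: "z = x \<otimes> y" "x \<in> A1" "x \<otimes> g \<in> A1" "y \<in> B1 \<union> (\<lambda>y. g \<otimes> y) ` B1"
          unfolding setmul_def by blast
        show "z \<in> X"
        proof (cases "y \<in> B1")
          case True
          then have "z \<in> setmul G A1 B1" using xy unfolding setmul_def by blast
          then show ?thesis using PA1 by blast
        next
          case False
          then obtain y' where y': "y' \<in> B1" "y = g \<otimes> y'" using xy by blast
          have "x \<in> carrier G" "y' \<in> carrier G" using xy y' PA1 by auto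
          then have "z = (x \<otimes> g) \<otimes> y'" using xy y' gG by (simp add: m_assoc)
          then have "z \<in> setmul G A1 B1" using xy y' unfolding setmul_def by blast
          then show ?thesis using PA1 by blast
        qed
      qed
      fix x y assume x: "x \<in> {x \<in> A1. x \<otimes> g \<in> A1}" and y: "y \<in> B1 \<union> (\<lambda>y. g \<otimes> y) ` B1"
        and e: "x \<otimes> y = a0 \<otimes> b0"
      show "x = a0"
      proof (cases "y \<in> B1")
        case True
        then show ?thesis using PA1(8)[OF _ True e] x by simp
      next
        case False
        then obtain y' where y': "y' \<in> B1" "y = g \<otimes> y'" using y by blast
        have xG: "x \<in> carrier G" and y'G: "y' \<in> carrier G" using x y' PA1 by auto
        have e2: "(x \<otimes> g) \<otimes> y' = a0 \<otimes> b0" using e y' xG y'G gG by (simp add: m_assoc)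
        have "x \<otimes> g = a0" using PA1(8)[OF _ y'(1) e2] x by simp
        then have "x \<otimes> (g \<otimes> b0) = a0 \<otimes> b0" using xG gG b0G by (metis m_assoc)
        then have "x \<otimes> b = a0 \<otimes> b0" using gb by simp
        then show ?thesis using PA1(8)[OF _ b] x by simp
      qed
    qed
    have c1: "card (A1 \<union> (\<lambda>x. x \<otimes> g) ` A1) + card {x \<in> A1. x \<otimes> g \<in> A1} = 2 * card A1"
      using card_right_ident PA1 gG by blast
    have c2: "card (B1 \<union> (\<lambda>y. g \<otimes> y) ` B1) + card {y \<in> B1. g \<otimes> y \<in> B1} = 2 * card B1"
      using card_left_ident PA1 gG by blast
    have m1: "card (fst T1) + card (snd T1) \<le> s" using p1(2)[OF PT1] s_def by simp
    have m2: "card (fst T2) + card (snd T2) \<le> s" using p1(2)[OF PT2] s_def by simp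
    have eq2: "card (fst T2) + card (snd T2) = s"
      using m1 m2 c1 c2 sA1 unfolding T1_def T2_def by simp
    have "card (snd T2) \<le> card (snd p)" using p(3)[OF PT2 eq2] .
    then have cB: "card (B1 \<union> (\<lambda>y. g \<otimes> y) ` B1) \<le> card B1" unfolding T2_def pAB by simp
    have sub: "B1 \<subseteq> B1 \<union> (\<lambda>y. g \<otimes> y) ` B1" by blast
    have "B1 = B1 \<union> (\<lambda>y. g \<otimes> y) ` B1"
      using card_subset_eq[OF _ sub] cB PA1(4) card_mono[OF _ sub] by (simp add: le_antisym)
    then have gsub: "(\<lambda>y. g \<otimes> y) ` B1 \<subseteq> B1" by blast
    have inj: "inj_on (\<lambda>y. g \<otimes> y) B1"
      using inj_on_cmult[OF gG] PA1(2) inj_on_subset by blast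
    have "(\<lambda>y. g \<otimes> y) ` B1 = B1"
      using card_subset_eq[OF PA1(4) gsub] card_image[OF inj] by simp
    then obtain y' where y': "y' \<in> B1" "b0 = g \<otimes> y'" using PA1(6) by force
    have y'G: "y' \<in> carrier G" using y' PA1 by auto
    have "a \<otimes> y' = a0 \<otimes> b0" using ag y' gG y'G a0G by (metis m_assoc)
    then show "a = a0" using PA1(8)[OF a y'(1)] by simp
  qed
  define I1 where "I1 = (\<lambda>a. a \<otimes> b0) ` A1"
  define I2 where "I2 = (\<lambda>a. a0 \<otimes> a) ` B1"
  have i1: "inj_on (\<lambda>a. a \<otimes> b0) A1"
    using inj_on_multc[OF b0G] PA1(1) inj_on_subset by blast
  have i2: "inj_on (\<lambda>a. a0 \<otimes> a) B1"
    using inj_on_cmult[OF a0G] PA1(2) inj_on_subset by blast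
  have cI1: "card I1 = card A1" unfolding I1_def using card_image[OF i1] .
  have cI2: "card I2 = card B1" unfolding I2_def using card_image[OF i2] .
  have inter: "I1 \<inter> I2 \<subseteq> {a0 \<otimes> b0}"
  proof
    fix z assume "z \<in> I1 \<inter> I2"
    then obtain a b where "a \<in> A1" "b \<in> B1" "z = a \<otimes> b0" "a \<otimes> b0 = a0 \<otimes> b"
      unfolding I1_def I2_def by auto
    then show "z \<in> {a0 \<otimes> b0}" using key by (metis singletonI)
  qed
  have cint: "card (I1 \<inter> I2) \<le> 1"
    using card_mono[OF _ inter] by simp
  have uX: "I1 \<union> I2 \<subseteq> X" using PA1(7) PA1(5) PA1(6) unfolding I1_def I2_def setmul_def by blast
  have fI: "finite I1" "finite I2" unfolding I1_def I2_def using PA1 by auto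
  have "card I1 + card I2 = card (I1 \<union> I2) + card (I1 \<inter> I2)" using card_Un_Int fI by blast
  moreover have "card (I1 \<union> I2) \<le> card X" using card_mono[OF fX uX] .
  ultimately have "card A1 + card B1 \<le> card X + 1" using cI1 cI2 cint by simp
  moreover have "card A + card B \<le> s" using p1(2)[OF PAB] s_def by simp
  ultimately show ?thesis using sA1 X_def by simp
qed


theorem mainTheorem1:
  fixes G (structure)
  assumes "group G"
    and "A \<subseteq> carrier G" and "B \<subseteq> carrier G" and "C \<subseteq> carrier G"
    and "finite A" and "finite B" and "finite C"
    and "A \<noteq> {}" and "B \<noteq> {}" and "C \<noteq> {}"
    and "B \<subseteq> C" and "\<one> \<in> C"
  shows "setmul3 G A B C = setmul G A B \<or> card (setmul3 G A B C) \<ge> card A + card B"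
proof (cases "setmul3 G A B C = setmul G A B")
  case True
  then show ?thesis by simp
next
  case False
  interpret group G by fact
  have sub: "setmul G A B \<subseteq> setmul3 G A B C"
  proof
    fix z assume "z \<in> setmul G A B"
    then obtain a b where ab: "a \<in> A" "b \<in> B" "z = a \<otimes> b" unfolding setmul_def by blast
    then have "z = a \<otimes> b \<otimes> \<one>" using assms(2,3) by (metis subsetD m_closed r_one)
    then show "z \<in> setmul3 G A B C" using ab assms(12) unfolding setmul3_def by blast
  qed
  with False obtain z where z: "z \<in> setmul3 G A B C" "z \<notin> setmul G A B" by blast
  then obtain a0 b0 c0 where abc: "a0 \<in> A" "b0 \<in> B" "c0 \<in> C" "z = a0 \<otimes> b0 \<otimes> c0"
    unfolding setmul3_def by blast
  have G0: "a0 \<in> carrier G" "b0 \<in> carrier G" "c0 \<in> carrier G" using abc assms(2,3,4) by auto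
  define d where "d = b0 \<otimes> c0"
  have dG: "d \<in> carrier G" unfolding d_def using G0 by simp
  have zd: "z = a0 \<otimes> d" unfolding d_def using abc G0 by (simp add: m_assoc)
  have dB: "d \<notin> B"
  proof
    assume "d \<in> B"
    then have "z \<in> setmul G A B" using zd abc unfolding setmul_def by blast
    then show False using z by simp
  qed
  define B2 where "B2 = insert d B"
  have K: "card A + card B2 \<le> card (setmul G A B2) + 1"
  proof (rule kemperman[of A B2 a0 d])
    show "A \<subseteq> carrier G" using assms by simp
    show "B2 \<subseteq> carrier G" using assms dG unfolding B2_def by simp
    show "finite A" "finite B2" using assms unfolding B2_def by auto
    show "a0 \<in> A" "d \<in> B2" using abc unfolding B2_def by auto
    fix a b assume a: "a \<in> A" and b: "b \<in> B2" and e: "a \<otimes> b = a0 \<otimes> d"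
    show "a = a0"
    proof (cases "b = d")
      case True
      then show ?thesis using e a assms(2) G0 dG by (metis subsetD right_cancel)
    next
      case False
      then have "b \<in> B" using b unfolding B2_def by simp
      then have "z \<in> setmul G A B" using a e zd unfolding setmul_def by (metis (mono_tags, lifting) mem_Collect_eq)
      then show ?thesis using z by simp
    qed
  qed
  have cB2: "card B2 = card B + 1" unfolding B2_def using dB assms(6) by simp
  have sub2: "setmul G A B2 \<subseteq> setmul3 G A B C"
  proof
    fix w assume "w \<in> setmul G A B2"
    then obtain a b where ab: "a \<in> A" "b \<in> B2" "w = a \<otimes> b" unfolding setmul_def by blast
    show "w \<in> setmul3 G A B C"
    proof (cases "b = d")
      case True
      then have "w = a \<otimes> b0 \<otimes> c0" using ab G0 assms(2) unfolding d_def by (auto simp: m_assoc)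
      then show ?thesis using ab abc unfolding setmul3_def by blast
    next
      case False
      then have "b \<in> B" using ab unfolding B2_def by simp
      then have "w \<in> setmul G A B" using ab unfolding setmul_def by blast
      then show ?thesis using sub by blast
    qed
  qed
  have "card (setmul G A B2) \<le> card (setmul3 G A B C)"
    using card_mono[OF setmul3_finite[OF assms(5,6,7)] sub2] .
  then show ?thesis using K cB2 by simp
qed

end
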